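(* In the Setting below, the subalgebra $N_{\mathcal M}$ of $\mathcal M$ is a Lie algebra.
   Context: Setting. Let $\mathbb F$ be a field of characteristic different from $2$ and $3$. A Malcev algebra is an anticommutative algebra $\mathcal M$ over $\mathbb F$ satisfying $(xz)(yt)=((xy)z)t+((yz)t)x+((zt)x)y+((tx)y)z$. Products are left-normed: $xyz=(xy)z$, $xyzt=((xy)z)t$. Put $J(x,y,z)=xyz+yzx+zxy$ (the Jacobian), $\{x,y,z\}=xyz-xzy+2x(yz)$, and $h(y,z,t,x,u)=\{yz,t,u\}x+\{yz,t,x\}u+\{yx,z,u\}t+\{yu,z,x\}t$. The variety $\mathcal H$ consists of the Malcev algebras satisfying $h(y,z,t,x,u)=0$ identically. Let $L=\mathfrak{sl}_2(\mathbb F)$ with basis $E,H,F$ and products $EH=E$, $FH=-F$, $EF=\tfrac12 H$. Standing assumption: $\mathcal M\in\mathcal H$ contains $L$ as a subalgebra and $mL\neq 0$ for every $0\neq m\in\mathcal M$. Define $N_{\mathcal M}=\{m\in\mathcal M: J(m,a,b)=0\ \forall a,b\in L\}$ (a subalgebra of $\mathcal M$). *)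

theory Defs
  imports Main "HOL.Vector_Spaces"
begin

definition bilinear_prod :: "('a::field \<Rightarrow> 'm::ab_group_add \<Rightarrow> 'm) \<Rightarrow> ('m \<Rightarrow> 'm \<Rightarrow> 'm) \<Rightarrow> bool" where
  "bilinear_prod sm mul \<longleftrightarrow>
     (\<forall>x y z. mul (x + y) z = mul x z + mul y z) \<and>
     (\<forall>x y z. mul x (y + z) = mul x y + mul x z) \<and>
     (\<forall>c x y. mul (sm c x) y = sm c (mul x y)) \<and>
     (\<forall>c x y. mul x (sm c y) = sm c (mul x y))"

definition anticommutative :: "('m::ab_group_add \<Rightarrow> 'm \<Rightarrow> 'm) \<Rightarrow> bool" where
  "anticommutative mul \<longleftrightarrow> (\<forall>x. mul x x = 0)"

definition malcev_identity :: "('m::ab_group_add \<Rightarrow> 'm \<Rightarrow> 'm) \<Rightarrow> bool" where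
  "malcev_identity mul \<longleftrightarrow> (\<forall>x y z t.
     mul (mul x z) (mul y t) =
       mul (mul (mul x y) z) t + mul (mul (mul y z) t) x
     + mul (mul (mul z t) x) y + mul (mul (mul t x) y) z)"

definition malcev_algebra :: "('a::field \<Rightarrow> 'm::ab_group_add \<Rightarrow> 'm) \<Rightarrow> ('m \<Rightarrow> 'm \<Rightarrow> 'm) \<Rightarrow> bool" where
  "malcev_algebra sm mul \<longleftrightarrow> Vector_Spaces.vector_space sm \<and> bilinear_prod sm mul
     \<and> anticommutative mul \<and> malcev_identity mul"

definition jac :: "('m::ab_group_add \<Rightarrow> 'm \<Rightarrow> 'm) \<Rightarrow> 'm \<Rightarrow> 'm \<Rightarrow> 'm \<Rightarrow> 'm" where
  "jac mul x y z = mul (mul x y) z + mul (mul y z) x + mul (mul z x) y"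

definition brace :: "('m::ab_group_add \<Rightarrow> 'm \<Rightarrow> 'm) \<Rightarrow> 'm \<Rightarrow> 'm \<Rightarrow> 'm \<Rightarrow> 'm" where
  "brace mul x y z = mul (mul x y) z - mul (mul x z) y + (mul x (mul y z) + mul x (mul y z))"

definition hpoly :: "('m::ab_group_add \<Rightarrow> 'm \<Rightarrow> 'm) \<Rightarrow> 'm \<Rightarrow> 'm \<Rightarrow> 'm \<Rightarrow> 'm \<Rightarrow> 'm \<Rightarrow> 'm" where
  "hpoly mul y z t x u =
     mul (brace mul (mul y z) t u) x + mul (brace mul (mul y z) t x) u
   + mul (brace mul (mul y x) z u) t + mul (brace mul (mul y u) z x) t"

definition in_variety_H :: "('a::field \<Rightarrow> 'm::ab_group_add \<Rightarrow> 'm) \<Rightarrow> ('m \<Rightarrow> 'm \<Rightarrow> 'm) \<Rightarrow> bool" where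
  "in_variety_H sm mul \<longleftrightarrow> malcev_algebra sm mul \<and> (\<forall>y z t x u. hpoly mul y z t x u = 0)"

definition sl2_triple :: "('a::field \<Rightarrow> 'm::ab_group_add \<Rightarrow> 'm) \<Rightarrow> ('m \<Rightarrow> 'm \<Rightarrow> 'm) \<Rightarrow> 'm \<Rightarrow> 'm \<Rightarrow> 'm \<Rightarrow> bool" where
  "sl2_triple sm mul e h f \<longleftrightarrow>
     e \<noteq> h \<and> e \<noteq> f \<and> h \<noteq> f \<and> \<not> module.dependent sm {e, h, f} \<and>
     mul e h = e \<and> mul f h = - f \<and> mul e f = sm (1/2) h"

definition N_set :: "('a::field \<Rightarrow> 'm::ab_group_add \<Rightarrow> 'm) \<Rightarrow> ('m \<Rightarrow> 'm \<Rightarrow> 'm) \<Rightarrow> 'm set \<Rightarrow> 'm set" where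
  "N_set sm mul L = {m. \<forall>a\<in>L. \<forall>b\<in>L. jac mul m a b = 0}"

end

theory Submission
  imports Defs
begin


datatype ft = Vr nat | LE | LH | LG | Mu ft ft

type_synonym poly = "(int \<times> ft) list"

fun enc :: "ft \<Rightarrow> nat list" where
  "enc (Vr i) = [0, i]" | "enc LE = [1]" | "enc LH = [2]" | "enc LG = [3]"
| "enc (Mu a b) = 4 # enc a @ enc b"

fun llt :: "nat list \<Rightarrow> nat list \<Rightarrow> bool" where
  "llt [] [] = False" | "llt [] (y#ys) = True" | "llt (x#xs) [] = False"
| "llt (x#xs) (y#ys) = (x < y \<or> (x = y \<and> llt xs ys))"

definition ftlt :: "ft \<Rightarrow> ft \<Rightarrow> bool" where "ftlt a b = llt (enc a) (enc b)"

fun lmul :: "ft \<Rightarrow> ft \<Rightarrow> (int \<times> ft) option" where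
  "lmul LE LE = Some (0, LE)" | "lmul LH LH = Some (0, LH)" | "lmul LG LG = Some (0, LG)"
| "lmul LE LH = Some (1, LE)" | "lmul LH LE = Some (-1, LE)"
| "lmul LG LH = Some (-1, LG)" | "lmul LH LG = Some (1, LG)"
| "lmul LE LG = Some (1, LH)" | "lmul LG LE = Some (-1, LH)"
| "lmul _ _ = None"

fun cmul :: "int \<times> ft \<Rightarrow> int \<times> ft \<Rightarrow> int \<times> ft" where
  "cmul (c, a) (d, b) = (case lmul a b of Some (s, t) \<Rightarrow> (c * d * s, t)
     | None \<Rightarrow> (if a = b then (0, a) else if ftlt a b then (c * d, Mu a b) else (- (c * d), Mu b a)))"

fun canon :: "ft \<Rightarrow> int \<times> ft" where
  "canon (Mu a b) = cmul (canon a) (canon b)"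
| "canon t = (1, t)"

fun canp :: "int \<times> ft \<Rightarrow> int \<times> ft" where
  "canp (c, t) = (case canon t of (d, s) \<Rightarrow> (c * d, s))"

function merge :: "poly \<Rightarrow> poly \<Rightarrow> poly" where
  "merge [] q = q"
| "merge (x#p) [] = x#p"
| "merge ((c,a)#p) ((d,b)#q) = (if a = b then (if c + d = 0 then merge p q else (c + d, a) # merge p q)
     else if ftlt a b then (c, a) # merge p ((d,b)#q) else (d, b) # merge ((c,a)#p) q)"
  by pat_completeness auto
termination by (relation "measure (\<lambda>(p,q). length p + length q)") auto

function msort :: "poly \<Rightarrow> poly" where
  "msort p = (if length p \<le> 1 then filter (\<lambda>x. fst x \<noteq> 0) p
     else merge (msort (take (length p div 2) p)) (msort (drop (length p div 2) p)))"
  by pat_completeness auto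
termination by (relation "measure length") auto

declare msort.simps[simp del]

definition nf :: "poly \<Rightarrow> poly" where "nf p = msort (map canp p)"

definition mulp :: "poly \<Rightarrow> poly \<Rightarrow> poly" where
  "mulp p q = concat (map (\<lambda>(c,s). map (\<lambda>(d,t). (c * d, Mu s t)) q) p)"

definition scalep :: "int \<Rightarrow> poly \<Rightarrow> poly" where
  "scalep k p = map (\<lambda>(c,t). (k * c, t)) p"

definition jacp :: "ft \<Rightarrow> ft \<Rightarrow> ft \<Rightarrow> poly" where
  "jacp x y z = [(1, Mu (Mu x y) z), (1, Mu (Mu y z) x), (1, Mu (Mu z x) y)]"

definition malp :: "ft \<Rightarrow> ft \<Rightarrow> ft \<Rightarrow> ft \<Rightarrow> poly" where
  "malp x y z t = [(1, Mu (Mu x z) (Mu y t)), (-1, Mu (Mu (Mu x y) z) t), (-1, Mu (Mu (Mu y z) t) x),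
     (-1, Mu (Mu (Mu z t) x) y), (-1, Mu (Mu (Mu t x) y) z)]"

datatype rel = RM ft ft ft ft | RJ ft ft ft | RMul rel ft

fun rpoly :: "rel \<Rightarrow> poly" where
  "rpoly (RM a b c d) = malp a b c d"
| "rpoly (RJ a b c) = jacp a b c"
| "rpoly (RMul r t) = mulp (rpoly r) [(1, t)]"

fun rvalid :: "(ft \<Rightarrow> ft \<Rightarrow> ft \<Rightarrow> bool) \<Rightarrow> rel \<Rightarrow> bool" where
  "rvalid P (RM a b c d) = True"
| "rvalid P (RJ a b c) = P a b c"
| "rvalid P (RMul r t) = rvalid P r"

definition combo :: "int list \<Rightarrow> rel list \<Rightarrow> poly" where
  "combo cs rs = concat (map (\<lambda>(c, r). scalep c (rpoly r)) (zip cs rs))"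

definition isLt :: "ft \<Rightarrow> bool" where "isLt t = (t = LE \<or> t = LH \<or> t = LG)"




locale mc =
  fixes sm :: "'a::field \<Rightarrow> 'm::ab_group_add \<Rightarrow> 'm" and mul :: "'m \<Rightarrow> 'm \<Rightarrow> 'm"
    and E H F :: 'm
  assumes vs: "Vector_Spaces.vector_space sm" and bil: "bilinear_prod sm mul"
    and ac: "anticommutative mul" and mi: "malcev_identity mul"
    and eh: "mul E H = E" and fh: "mul F H = - F" and ef: "mul E F = sm (1/2) H"
    and two: "(2::'a) \<noteq> 0"
begin

sublocale vector_space sm by (rule vs)

lemma madd1: "mul (x+y) z = mul x z + mul y z" using bil by (simp add: bilinear_prod_def)
lemma madd2: "mul x (y+z) = mul x y + mul x z" using bil by (simp add: bilinear_prod_def)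
lemma msc1: "mul (sm c x) y = sm c (mul x y)" using bil by (simp add: bilinear_prod_def)
lemma msc2: "mul x (sm c y) = sm c (mul x y)" using bil by (simp add: bilinear_prod_def)

lemma m0l[simp]: "mul 0 x = 0"
  using msc1[of 0 0 x] by simp
lemma m0r[simp]: "mul x 0 = 0"
  using msc2[of x 0 0] by simp
lemma mnegl: "mul (- x) y = - mul x y"
  using msc1[of "-1" x y] by simp
lemma mnegr: "mul x (- y) = - mul x y"
  using msc2[of x "-1" y] by simp
lemma mdiffl: "mul (x - y) z = mul x z - mul y z"
  using madd1[of x "- y" z] by (simp add: mnegl)
lemma mdiffr: "mul z (x - y) = mul z x - mul z y"
  using madd2[of z x "- y"] by (simp add: mnegr)
lemma mxx[simp]: "mul x x = 0" using ac by (simp add: anticommutative_def)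
lemma anti: "mul y x = - mul x y"
proof -
  have "mul (x+y) (x+y) = mul x x + mul y x + (mul x y + mul y y)" by (simp only: madd1 madd2)
  then have "mul y x + mul x y = 0" by simp
  then show ?thesis by (simp add: eq_neg_iff_add_eq_0)
qed

definition GG where "GG = F + F"

lemma half: "sm (1/2) x + sm (1/2) x = x"
proof -
  have a: "sm (1/2) x + sm (1/2) x = sm (1/2 + 1/2) x" by (rule scale_left_distrib[symmetric])
  have b: "(1/2 + 1/2 :: 'a) = 1"
    using two by (metis add_divide_distrib divide_self one_add_one)
  show ?thesis using a b by (metis scale_one)
qed

lemma eg: "mul E GG = H" by (simp add: GG_def madd2 ef half)
lemma ge: "mul GG E = - H" using eg anti by metis
lemma gh: "mul GG H = - GG" by (simp add: GG_def madd1 fh)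
lemma hg: "mul H GG = GG" using gh anti by (metis minus_minus)
lemma he: "mul H E = - E" using eh anti by metis

fun ev :: "(nat \<Rightarrow> 'm) \<Rightarrow> ft \<Rightarrow> 'm" where
  "ev \<rho> (Vr i) = \<rho> i" | "ev \<rho> LE = E" | "ev \<rho> LH = H" | "ev \<rho> LG = GG"
| "ev \<rho> (Mu a b) = mul (ev \<rho> a) (ev \<rho> b)"

definition evp :: "(nat \<Rightarrow> 'm) \<Rightarrow> poly \<Rightarrow> 'm" where
  "evp \<rho> p = sum_list (map (\<lambda>(c,t). sm (of_int c) (ev \<rho> t)) p)"

lemma evp_nil[simp]: "evp \<rho> [] = 0" by (simp add: evp_def)
lemma evp_cons[simp]: "evp \<rho> ((c,t)#p) = sm (of_int c) (ev \<rho> t) + evp \<rho> p" by (simp add: evp_def)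
lemma evp_app[simp]: "evp \<rho> (p @ q) = evp \<rho> p + evp \<rho> q" by (simp add: evp_def)

lemma lmul_sound: "lmul a b = Some (s,t) \<Longrightarrow> mul (ev \<rho> a) (ev \<rho> b) = sm (of_int s) (ev \<rho> t)"
  by (cases "(a,b)" rule: lmul.cases) (auto simp: eh he eg ge gh hg)

lemma mscsc: "mul (sm a x) (sm b y) = sm (a * b) (mul x y)"
  by (simp add: msc1 msc2 mult.commute)

lemma cmul_sound:
  "mul (sm (of_int c) (ev \<rho> a)) (sm (of_int d) (ev \<rho> b)) =
     sm (of_int (fst (cmul (c,a) (d,b)))) (ev \<rho> (snd (cmul (c,a) (d,b))))"
proof (cases "lmul a b")
  case None
  then show ?thesis
    by (auto simp: mscsc anti[of "ev \<rho> a" "ev \<rho> b"])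
next
  case (Some st)
  then obtain s t where st: "lmul a b = Some (s,t)" by (cases st) auto
  show ?thesis using lmul_sound[OF st] st by (simp add: mscsc mult.assoc)
qed

lemma canon_sound: "sm (of_int (fst (canon t))) (ev \<rho> (snd (canon t))) = ev \<rho> t"
proof (induction t)
  case (Mu a b)
  obtain c x where a: "canon a = (c, x)" by (cases "canon a")
  obtain d y where b: "canon b = (d, y)" by (cases "canon b")
  show ?case using Mu a b cmul_sound[where c=c and a=x and d=d and b=y and \<rho>=\<rho>] by simp
qed auto

lemma canp_sound: "evp \<rho> [canp x] = evp \<rho> [x]"
proof -
  obtain c t where x: "x = (c,t)" by (cases x)
  obtain d s where ct: "canon t = (d, s)" by (cases "canon t")
  have "sm (of_int d) (ev \<rho> s) = ev \<rho> t" using canon_sound[of t \<rho>] ct by simp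
  then have "sm (of_int c * of_int d) (ev \<rho> s) = sm (of_int c) (ev \<rho> t)" by (simp flip: scale_scale)
  then show ?thesis using x ct by (simp add: ac_simps)
qed

lemma evp_map_canp: "evp \<rho> (map canp p) = evp \<rho> p"
proof (induction p)
  case (Cons x p)
  have "evp \<rho> (map canp (x # p)) = evp \<rho> [canp x] + evp \<rho> (map canp p)"
    using evp_app[of \<rho> "[canp x]" "map canp p"] by simp
  also have "\<dots> = evp \<rho> [x] + evp \<rho> p" using Cons canp_sound by simp
  also have "\<dots> = evp \<rho> (x # p)" using evp_app[of \<rho> "[x]" p] by simp
  finally show ?case .
qed simp

lemma merge_sound: "evp \<rho> (merge p q) = evp \<rho> p + evp \<rho> q"
proof (induction p q rule: merge.induct)
  case (3 c a p d b q)
  show ?case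
  proof (cases "a = b")
    case True
    have s: "sm (of_int c) (ev \<rho> a) + sm (of_int d) (ev \<rho> a) = sm (of_int (c + d)) (ev \<rho> a)"
      by (simp add: scale_left_distrib)
    show ?thesis
    proof (cases "c + d = 0")
      case True
      then show ?thesis using 3 \<open>a = b\<close> s by (simp add: ac_simps)
    next
      case False
      then show ?thesis using 3 \<open>a = b\<close> s by (simp add: ac_simps)
    qed
  next
    case False
    then show ?thesis using 3 by (simp add: ac_simps)
  qed
qed simp_all

lemma evp_filter: "evp \<rho> (filter (\<lambda>x. fst x \<noteq> 0) p) = evp \<rho> p"
  by (induction p) auto

lemma msort_sound: "evp \<rho> (msort p) = evp \<rho> p"
proof (induction p rule: msort.induct)
  case (1 p)
  show ?case
  proof (cases "length p \<le> 1")
    case True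
    then show ?thesis by (simp add: msort.simps[of p] evp_filter)
  next
    case False
    then have "evp \<rho> (msort p) = evp \<rho> (take (length p div 2) p) + evp \<rho> (drop (length p div 2) p)"
      using 1 by (simp add: msort.simps[of p] merge_sound)
    also have "\<dots> = evp \<rho> p" using evp_app[of \<rho> "take (length p div 2) p" "drop (length p div 2) p"] by simp
    finally show ?thesis .
  qed
qed

lemma nf_sound: "evp \<rho> (nf p) = evp \<rho> p"
  by (simp add: nf_def msort_sound evp_map_canp)

lemma evp_scalep: "evp \<rho> (scalep k p) = sm (of_int k) (evp \<rho> p)"
  by (induction p) (auto simp: scalep_def scale_right_distrib)

lemma evp_mul_single: "evp \<rho> (map (\<lambda>(d,t). (c * d, Mu s t)) q) = mul (sm (of_int c) (ev \<rho> s)) (evp \<rho> q)"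
  by (induction q) (auto simp: madd2 mscsc)

lemma evp_mulp: "evp \<rho> (mulp p q) = mul (evp \<rho> p) (evp \<rho> q)"
  by (induction p) (auto simp: mulp_def evp_mul_single madd1)

lemma evp_jacp: "evp \<rho> (jacp x y z) = jac mul (ev \<rho> x) (ev \<rho> y) (ev \<rho> z)"
  by (simp add: jacp_def jac_def add.assoc)

lemma evp_malp: "evp \<rho> (malp x y z t) = 0"
proof -
  have e: "mul (mul (ev \<rho> x) (ev \<rho> z)) (mul (ev \<rho> y) (ev \<rho> t)) =
     mul (mul (mul (ev \<rho> x) (ev \<rho> y)) (ev \<rho> z)) (ev \<rho> t) + mul (mul (mul (ev \<rho> y) (ev \<rho> z)) (ev \<rho> t)) (ev \<rho> x)
     + mul (mul (mul (ev \<rho> z) (ev \<rho> t)) (ev \<rho> x)) (ev \<rho> y) + mul (mul (mul (ev \<rho> t) (ev \<rho> x)) (ev \<rho> y)) (ev \<rho> z)"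
    using mi by (simp add: malcev_identity_def)
  show ?thesis by (simp add: malp_def e algebra_simps)
qed

lemma rel_sound:
  assumes P: "\<And>a b c. P a b c \<Longrightarrow> jac mul (ev \<rho> a) (ev \<rho> b) (ev \<rho> c) = 0"
  shows "rvalid P r \<Longrightarrow> evp \<rho> (rpoly r) = 0"
  by (induction r) (auto simp: evp_malp evp_jacp P evp_mulp)

lemma combo_sound:
  assumes P: "\<And>a b c. P a b c \<Longrightarrow> jac mul (ev \<rho> a) (ev \<rho> b) (ev \<rho> c) = 0"
  shows "list_all (rvalid P) rs \<Longrightarrow> evp \<rho> (combo cs rs) = 0"
proof (induction rs arbitrary: cs)
  case (Cons r rs)
  then show ?case
    by (cases cs) (auto simp: combo_def evp_scalep rel_sound[OF P])
qed (simp add: combo_def)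

lemma cert:
  assumes P: "\<And>a b c. P a b c \<Longrightarrow> jac mul (ev \<rho> a) (ev \<rho> b) (ev \<rho> c) = 0"
    and v: "list_all (rvalid P) rs" and n: "nf (combo cs rs @ scalep (- d) tgt) = []"
  shows "sm (of_int d) (evp \<rho> tgt) = 0"
proof -
  have "0 = evp \<rho> (nf (combo cs rs @ scalep (- d) tgt))" by (simp add: n)
  also have "\<dots> = - sm (of_int d) (evp \<rho> tgt)"
    by (simp add: nf_sound combo_sound[OF P v] evp_scalep)
  finally show ?thesis by simp
qed

end



fun isNt :: "ft \<Rightarrow> bool" where
  "isNt (Vr i) = (i \<le> 1)"
| "isNt (Mu (Vr i) l) = (i \<le> 1 \<and> isLt l)"
| "isNt (Mu l (Vr i)) = (isLt l \<and> i \<le> 1)"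
| "isNt _ = False"

definition P0 :: "ft \<Rightarrow> ft \<Rightarrow> ft \<Rightarrow> bool" where
  "P0 a b c = ((a = Vr 0 \<and> isLt b \<and> isLt c) \<or> (isLt a \<and> b = Vr 0 \<and> isLt c) \<or> (isLt a \<and> isLt b \<and> c = Vr 0))"
definition PA :: "ft \<Rightarrow> ft \<Rightarrow> ft \<Rightarrow> bool" where
  "PA a b c = ((isLt a \<and> isLt b \<and> isNt c) \<or> (isLt a \<and> isNt b \<and> isLt c) \<or> (isNt a \<and> isLt b \<and> isLt c))"
definition PS :: "ft \<Rightarrow> ft \<Rightarrow> ft \<Rightarrow> bool" where
  "PS a b c = ((isLt a \<or> isLt b \<or> isLt c) \<and> (isLt a \<or> isNt a) \<and> (isLt b \<or> isNt b) \<and> (isLt c \<or> isNt c))"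
definition PB :: "ft \<Rightarrow> ft \<Rightarrow> ft \<Rightarrow> bool" where
  "PB a b c = (isLt a \<or> isLt b \<or> isLt c)"

lemma nat_le1: "(i::nat) \<le> 1 \<longleftrightarrow> i = 0 \<or> i = 1" by arith
lemma isLt_Mu[simp]: "\<not> isLt (Mu a b)" by (simp add: isLt_def)
lemma isLt_Vr[simp]: "\<not> isLt (Vr i)" by (simp add: isLt_def)
lemma isLt_simps[simp]: "isLt LE" "isLt LH" "isLt LG" by (simp_all add: isLt_def)

context mc
begin

definition NN where "NN = N_set sm mul (span {E, H, F})"

lemma jac_cyc: "jac mul x y z = jac mul y z x" by (simp add: jac_def ac_simps)
lemma jac_swap: "jac mul y x z = - jac mul x y z"
  unfolding jac_def using anti[where x=x and y=y] anti[where x=z and y=x] anti[where x=y and y=z]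
  by (simp add: mnegl algebra_simps)
lemma jac_swap23: "jac mul x z y = - jac mul x y z"
  using jac_cyc[of x z y] jac_swap[of y z x] jac_cyc[of x y z] by simp

lemma dbl0: assumes "y + y = (0::'m)" shows "y = 0"
proof -
  have "y = sm (1/2) (y + y)" using half[of y] by (simp add: scale_right_distrib)
  then show ?thesis using assms by simp
qed

lemma jac_xx: "jac mul x x z = 0"
  by (rule dbl0, rule eq_neg_iff_add_eq_0[THEN iffD1], rule jac_swap)
lemma jac_xyy: "jac mul x y y = 0"
  by (rule dbl0, rule eq_neg_iff_add_eq_0[THEN iffD1], rule jac_swap23)

lemma jac_add1: "jac mul (x + x') y z = jac mul x y z + jac mul x' y z"
  by (simp add: jac_def madd1 madd2 algebra_simps)
lemma jac_sc1: "jac mul (sm c x) y z = sm c (jac mul x y z)"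
  by (simp add: jac_def msc1 msc2 scale_right_distrib)
lemma jac_01: "jac mul 0 y z = 0" by (simp add: jac_def)
lemma jac_lin1: "jac mul (sm c a + w) y z = sm c (jac mul a y z) + jac mul w y z"
  by (simp add: jac_add1 jac_sc1)
lemma jac_lin2: "jac mul x (sm c a + w) z = sm c (jac mul x a z) + jac mul x w z"
  using jac_cyc[of x "sm c a + w" z] jac_cyc[of x a z] jac_cyc[of x w z] jac_lin1[of c a w z x] by simp
lemma jac_lin3: "jac mul x y (sm c a + w) = sm c (jac mul x y a) + jac mul x y w"
  using jac_cyc[of x y "sm c a + w"] jac_cyc[of y "sm c a + w" x] jac_cyc[of x y a] jac_cyc[of y a x]
    jac_cyc[of x y w] jac_cyc[of y w x] jac_lin1[of c a w x y] by simp
lemma jac_02: "jac mul x 0 z = 0" using jac_cyc[of x 0 z] jac_01 by simp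
lemma jac_03: "jac mul x y 0 = 0" using jac_cyc[of x y 0] jac_cyc[of y 0 x] jac_01 by simp
lemma jac_add3: "jac mul x y (a + w) = jac mul x y a + jac mul x y w"
  using jac_lin3[of x y 1 a w] by simp
lemma jac_add1': "jac mul (a + w) y z = jac mul a y z + jac mul w y z"
  by (rule jac_add1)

lemma E_L: "E \<in> span {E, H, F}" by (simp add: span_base)
lemma H_L: "H \<in> span {E, H, F}" by (simp add: span_base)
lemma F_L: "F \<in> span {E, H, F}" by (simp add: span_base)
lemma G_L: "GG \<in> span {E, H, F}" unfolding GG_def by (intro span_add F_L)

lemma isLt_L: "isLt t \<Longrightarrow> ev \<rho> t \<in> span {E, H, F}"
  unfolding isLt_def using E_L H_L G_L by auto

lemma F_half: "F = sm (1/2) GG"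
  unfolding GG_def using half[of F] by (simp add: scale_right_distrib)

lemma NN_iff: "x \<in> NN \<longleftrightarrow> (\<forall>a\<in>span {E, H, F}. \<forall>b\<in>span {E, H, F}. jac mul x a b = 0)"
  by (simp add: NN_def N_set_def)

lemma NN_0: "0 \<in> NN" by (simp add: NN_iff jac_01)
lemma NN_add: "x \<in> NN \<Longrightarrow> y \<in> NN \<Longrightarrow> x + y \<in> NN" by (simp add: NN_iff jac_add1)
lemma NN_sc: "x \<in> NN \<Longrightarrow> sm c x \<in> NN" by (simp add: NN_iff jac_sc1)
lemma NN_neg: "x \<in> NN \<Longrightarrow> - x \<in> NN" using NN_sc[of x "-1"] by simp

lemma jacN3_1: "x \<in> NN \<Longrightarrow> a \<in> span {E, H, F} \<Longrightarrow> b \<in> span {E, H, F} \<Longrightarrow> jac mul x a b = 0"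
  by (simp add: NN_iff)
lemma jacN3_2: "x \<in> NN \<Longrightarrow> a \<in> span {E, H, F} \<Longrightarrow> b \<in> span {E, H, F} \<Longrightarrow> jac mul b x a = 0"
  by (metis jacN3_1 jac_cyc)
lemma jacN3_3: "x \<in> NN \<Longrightarrow> a \<in> span {E, H, F} \<Longrightarrow> b \<in> span {E, H, F} \<Longrightarrow> jac mul a b x = 0"
  by (metis jacN3_1 jac_cyc)

lemma NB:
  assumes a1: "jac mul x E H = 0" and a2: "jac mul x E GG = 0" and a3: "jac mul x H GG = 0"
  shows "x \<in> NN"
proof -
  have f1: "jac mul x E F = 0" using a2 by (intro dbl0[of "jac mul x _ F"]) (simp add: GG_def jac_add3)
  have f2: "jac mul x H F = 0" using a3 by (intro dbl0[of "jac mul x _ F"]) (simp add: GG_def jac_add3)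
  have basis: "\<forall>a\<in>{E, H, F}. \<forall>b\<in>{E, H, F}. jac mul x a b = 0"
  proof -
    have b1: "jac mul x H E = 0" using jac_swap23[of x E H] a1 by simp
    have b2: "jac mul x F E = 0" using jac_swap23[of x E F] f1 by simp
    have b3: "jac mul x F H = 0" using jac_swap23[of x H F] f2 by simp
    show ?thesis using a1 f1 f2 b1 b2 b3 jac_xyy[of x E] jac_xyy[of x H] jac_xyy[of x F] by auto
  qed
  have step1: "\<And>b a. b \<in> {E, H, F} \<Longrightarrow> a \<in> span {E, H, F} \<Longrightarrow> jac mul x a b = 0"
  proof -
    fix b a assume b: "b \<in> {E, H, F}" and a: "a \<in> span {E, H, F}"
    from a show "jac mul x a b = 0"
    proof (induction rule: span_induct_alt)
      case base then show ?case by (simp add: jac_02)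
    next
      case (step c a0 y) then show ?case using basis b by (auto simp: jac_lin2)
    qed
  qed
  have "\<And>a b. a \<in> span {E, H, F} \<Longrightarrow> b \<in> span {E, H, F} \<Longrightarrow> jac mul x a b = 0"
  proof -
    fix a b assume a: "a \<in> span {E, H, F}" and b: "b \<in> span {E, H, F}"
    from b show "jac mul x a b = 0"
    proof (induction rule: span_induct_alt)
      case base then show ?case by (simp add: jac_03)
    next
      case (step c b0 y) then show ?case using step1 a by (auto simp: jac_lin3)
    qed
  qed
  then show ?thesis by (simp add: NN_iff)
qed

lemma P0_sound: "\<rho> 0 \<in> NN \<Longrightarrow> P0 a b c \<Longrightarrow> jac mul (ev \<rho> a) (ev \<rho> b) (ev \<rho> c) = 0"
  unfolding P0_def by (auto intro: jacN3_1 jacN3_2 jacN3_3 isLt_L)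


lemma c0_EEH:
  assumes "\<rho> 0 \<in> NN"
  shows "sm (of_int 1) (evp \<rho> (jacp (Mu (Vr 0) LE) LE LH)) = 0"
    apply (rule cert[where P=P0 and d=1 and tgt="jacp (Mu (Vr 0) LE) LE LH" and cs="[(1)]" and rs="[(RM LE LH LE (Vr 0))]"])
      apply (erule P0_sound[where \<rho>=\<rho>, OF assms])
     apply code_simp
    apply code_simp
    done

lemma c0_EEG:
  assumes "\<rho> 0 \<in> NN"
  shows "sm (of_int 1) (evp \<rho> (jacp (Mu (Vr 0) LE) LE LG)) = 0"
    apply (rule cert[where P=P0 and d=1 and tgt="jacp (Mu (Vr 0) LE) LE LG" and cs="[(-1), (1)]" and rs="[(RJ LE LH (Vr 0)), (RM LE LG LE (Vr 0))]"])
      apply (erule P0_sound[where \<rho>=\<rho>, OF assms])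
     apply code_simp
    apply code_simp
    done

lemma c0_EHG:
  assumes "\<rho> 0 \<in> NN"
  shows "sm (of_int 1) (evp \<rho> (jacp (Mu (Vr 0) LE) LH LG)) = 0"
    apply (rule cert[where P=P0 and d=1 and tgt="jacp (Mu (Vr 0) LE) LH LG" and cs="[(-1), (-1), (-1)]" and rs="[(RJ LE LG (Vr 0)), (RM LE LH LG (Vr 0)), (RMul (RJ LE LG (Vr 0)) LH)]"])
      apply (erule P0_sound[where \<rho>=\<rho>, OF assms])
     apply code_simp
    apply code_simp
    done

lemma c0_HEH:
  assumes "\<rho> 0 \<in> NN"
  shows "sm (of_int 1) (evp \<rho> (jacp (Mu (Vr 0) LH) LE LH)) = 0"
    apply (rule cert[where P=P0 and d=1 and tgt="jacp (Mu (Vr 0) LH) LE LH" and cs="[(1), (-1)]" and rs="[(RJ LE LH (Vr 0)), (RM LH LE LH (Vr 0))]"])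
      apply (erule P0_sound[where \<rho>=\<rho>, OF assms])
     apply code_simp
    apply code_simp
    done

lemma c0_HEG:
  assumes "\<rho> 0 \<in> NN"
  shows "sm (of_int 1) (evp \<rho> (jacp (Mu (Vr 0) LH) LE LG)) = 0"
    apply (rule cert[where P=P0 and d=1 and tgt="jacp (Mu (Vr 0) LH) LE LG" and cs="[(1), (-1), (1)]" and rs="[(RM LE LG LH (Vr 0)), (RM LG LE LH (Vr 0)), (RMul (RJ LE LG (Vr 0)) LH)]"])
      apply (erule P0_sound[where \<rho>=\<rho>, OF assms])
     apply code_simp
    apply code_simp
    done

lemma c0_HHG:
  assumes "\<rho> 0 \<in> NN"
  shows "sm (of_int 1) (evp \<rho> (jacp (Mu (Vr 0) LH) LH LG)) = 0"
    apply (rule cert[where P=P0 and d=1 and tgt="jacp (Mu (Vr 0) LH) LH LG" and cs="[(1), (1)]" and rs="[(RJ LG LH (Vr 0)), (RM LH LG LH (Vr 0))]"])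
      apply (erule P0_sound[where \<rho>=\<rho>, OF assms])
     apply code_simp
    apply code_simp
    done

lemma c0_GEH:
  assumes "\<rho> 0 \<in> NN"
  shows "sm (of_int 1) (evp \<rho> (jacp (Mu (Vr 0) LG) LE LH)) = 0"
    apply (rule cert[where P=P0 and d=1 and tgt="jacp (Mu (Vr 0) LG) LE LH" and cs="[(1), (1), (-1)]" and rs="[(RJ LE LG (Vr 0)), (RM LG LH LE (Vr 0)), (RMul (RJ LE LG (Vr 0)) LH)]"])
      apply (erule P0_sound[where \<rho>=\<rho>, OF assms])
     apply code_simp
    apply code_simp
    done

lemma c0_GEG:
  assumes "\<rho> 0 \<in> NN"
  shows "sm (of_int 1) (evp \<rho> (jacp (Mu (Vr 0) LG) LE LG)) = 0"
    apply (rule cert[where P=P0 and d=1 and tgt="jacp (Mu (Vr 0) LG) LE LG" and cs="[(-1), (-1)]" and rs="[(RJ LG LH (Vr 0)), (RM LG LE LG (Vr 0))]"])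
      apply (erule P0_sound[where \<rho>=\<rho>, OF assms])
     apply code_simp
    apply code_simp
    done

lemma c0_GHG:
  assumes "\<rho> 0 \<in> NN"
  shows "sm (of_int 1) (evp \<rho> (jacp (Mu (Vr 0) LG) LH LG)) = 0"
    apply (rule cert[where P=P0 and d=1 and tgt="jacp (Mu (Vr 0) LG) LH LG" and cs="[(-1)]" and rs="[(RM LG LH LG (Vr 0))]"])
      apply (erule P0_sound[where \<rho>=\<rho>, OF assms])
     apply code_simp
    apply code_simp
    done

lemma NL_letters:
  assumes x: "x \<in> NN"
  shows "mul x E \<in> NN" "mul x H \<in> NN" "mul x GG \<in> NN"
proof -
  let ?r = "\<lambda>_::nat. x"
  have r: "?r 0 \<in> NN" using x by simp
  show "mul x E \<in> NN"
    using c0_EEH[OF r] c0_EEG[OF r] c0_EHG[OF r] by (intro NB) (simp_all add: evp_jacp)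
  show "mul x H \<in> NN"
    using c0_HEH[OF r] c0_HEG[OF r] c0_HHG[OF r] by (intro NB) (simp_all add: evp_jacp)
  show "mul x GG \<in> NN"
    using c0_GEH[OF r] c0_GEG[OF r] c0_GHG[OF r] by (intro NB) (simp_all add: evp_jacp)
qed

lemma NL:
  assumes x: "x \<in> NN" and l: "l \<in> span {E, H, F}"
  shows "mul x l \<in> NN"
  using l
proof (induction rule: span_induct_alt)
  case base then show ?case by (simp add: NN_0)
next
  case (step c a0 y)
  have a0: "mul x a0 \<in> NN"
  proof -
    have "mul x F = sm (1/2) (mul x GG)" by (subst F_half) (simp add: msc2)
    then show ?thesis using step(1) NL_letters[OF x] NN_sc by auto
  qed
  have "mul x (sm c a0 + y) = sm c (mul x a0) + mul x y" by (simp add: madd2 msc2)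
  then show ?case using a0 step(2) NN_add NN_sc by simp
qed

lemma LN: "x \<in> NN \<Longrightarrow> l \<in> span {E, H, F} \<Longrightarrow> mul l x \<in> NN"
  using NL NN_neg anti by metis

lemma isNt_N:
  assumes r0: "\<rho> 0 \<in> NN" and r1: "\<rho> 1 \<in> NN"
  shows "isNt t \<Longrightarrow> ev \<rho> t \<in> NN"
proof -
  have v: "\<And>i. i \<le> 1 \<Longrightarrow> \<rho> i \<in> NN"
  proof -
    fix i :: nat assume "i \<le> 1"
    then have "i = 0 \<or> i = 1" by arith
    then show "\<rho> i \<in> NN" using r0 r1 by auto
  qed
  have v': "\<And>i. i \<le> Suc 0 \<Longrightarrow> \<rho> i \<in> NN" using v by simp
  show "isNt t \<Longrightarrow> ev \<rho> t \<in> NN"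
    by (induct t rule: isNt.induct) (auto intro: NL LN v v' isLt_L E_L H_L G_L)
qed

lemma PA_sound:
  assumes r0: "\<rho> 0 \<in> NN" and r1: "\<rho> 1 \<in> NN" and p: "PA a b c"
  shows "jac mul (ev \<rho> a) (ev \<rho> b) (ev \<rho> c) = 0"
proof -
  note N = isNt_N[OF r0 r1]
  from p show ?thesis unfolding PA_def
  proof (elim disjE conjE)
    assume "isLt a" "isLt b" "isNt c" then show ?thesis by (rule jacN3_3[OF N isLt_L isLt_L, rotated 1])
  next
    assume "isLt a" "isNt b" "isLt c" then show ?thesis by (metis jacN3_2 N isLt_L)
  next
    assume "isNt a" "isLt b" "isLt c" then show ?thesis by (metis jacN3_1 N isLt_L)
  qed
qed


lemma cA_E:
  assumes "\<rho> 0 \<in> NN" "\<rho> 1 \<in> NN"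
  shows "sm (of_int 1) (evp \<rho> (jacp LE (Vr 0) (Vr 1))) = 0"
    apply (rule cert[where P=PA and d=1 and tgt="jacp LE (Vr 0) (Vr 1)" and cs="[(-1), (-1), (-1), (1), (-1), (-1), (1), (1), (-1), (-1), (1), (1), (-1), (1), (-1), (1), (-1), (-1), (1), (-1), (-1), (1), (-1), (-1), (-2), (1), (1), (-1), (1), (-1)]" and rs="[(RM LE LH (Vr 0) (Vr 1)), (RM LE LH (Vr 1) (Vr 0)), (RM LE (Vr 0) LH (Vr 1)), (RM LG LE (Vr 0) (Mu LE (Vr 1))), (RM LH LE (Vr 0) (Mu LH (Vr 1))), (RM LE LE (Mu LG (Vr 0)) (Vr 1)), (RM LE LH (Mu LH (Vr 0)) (Vr 1)), (RM LH LE (Mu LH (Vr 0)) (Vr 1)), (RM LH LH (Mu LE (Vr 0)) (Vr 1)), (RM LE LE (Vr 1) (Mu LG (Vr 0))), (RM LE LH (Vr 1) (Mu LH (Vr 0))), (RM LH LE (Vr 1) (Mu LH (Vr 0))), (RM LH LH (Vr 1) (Mu LE (Vr 0))), (RM LG LE (Mu LE (Vr 1)) (Vr 0)), (RM LH LE (Mu LH (Vr 1)) (Vr 0)), (RM LE (Vr 0) LG (Mu LE (Vr 1))), (RM LE (Vr 0) LH (Mu LH (Vr 1))), (RM LE (Mu LE (Vr 0)) LG (Vr 1)), (RM LE (Mu LH (Vr 0)) LH (Vr 1)), (RMul (RJ LE LG (Vr 0)) (Mu LE (Vr 1))), (RMul (RJ LE LH (Vr 0)) (Vr 1)), (RMul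 (RJ LE LH (Vr 0)) (Mu LH (Vr 1))), (RMul (RJ LE LH (Mu LH (Vr 0))) (Vr 1)), (RMul (RJ LE LG (Vr 1)) (Mu LE (Vr 0))), (RMul (RJ LE LH (Vr 1)) (Vr 0)), (RMul (RJ LE LH (Vr 1)) (Mu LH (Vr 0))), (RMul (RM LE LE LG (Vr 0)) (Vr 1)), (RMul (RM LE LH LH (Vr 0)) (Vr 1)), (RMul (RMul (RJ LE LG (Vr 0)) (Vr 1)) LE), (RMul (RMul (RJ LE LH (Vr 0)) (Vr 1)) LH)]"])
      apply (erule PA_sound[where \<rho>=\<rho>, OF assms])
     apply code_simp
    apply code_simp
    done

lemma cA_H:
  assumes "\<rho> 0 \<in> NN" "\<rho> 1 \<in> NN"
  shows "sm (of_int 1) (evp \<rho> (jacp LH (Vr 0) (Vr 1))) = 0"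
    apply (rule cert[where P=PA and d=1 and tgt="jacp LH (Vr 0) (Vr 1)" and cs="[(-1), (-1), (-1), (-1), (-1), (1), (2), (-1), (1), (1), (2), (-1), (1), (-1), (-1), (-1), (-1), (1), (2), (1), (1), (2), (-2), (1), (-2), (1), (1), (-2), (1), (1), (-2)]" and rs="[(RM LE LG (Vr 0) (Vr 1)), (RM LE LG (Vr 1) (Vr 0)), (RM LE (Vr 0) LG (Vr 1)), (RM LH LE (Vr 0) (Mu LG (Vr 1))), (RM LH LG (Vr 0) (Mu LE (Vr 1))), (RM LE LG (Mu LH (Vr 0)) (Vr 1)), (RM LG LE (Mu LH (Vr 0)) (Vr 1)), (RM LH LE (Mu LG (Vr 0)) (Vr 1)), (RM LH LG (Mu LE (Vr 0)) (Vr 1)), (RM LE LG (Vr 1) (Mu LH (Vr 0))), (RM LG LE (Vr 1) (Mu LH (Vr 0))), (RM LH LE (Vr 1) (Mu LG (Vr 0))), (RM LH LG (Vr 1) (Mu LE (Vr 0))), (RM LH LE (Mu LG (Vr 1)) (Vr 0)), (RM LH LG (Mu LE (Vr 1)) (Vr 0)), (RM LE (Vr 0) LH (Mu LG (Vr 1))), (RM LG (Vr 0) LH (Mu LE (Vr 1))), (RM LE (Mu LH (Vr 0)) LG (Vr 1)), (RM LG (Mu LE (Vr 0)) LH (Vr 1)), (RMul (RJ LE LG (Vr 0)) (Vr 1)), (RMul (RJ LE LG (Vr 0)) (Mu LH (Vr 1))), (RMul (RJ LG LH (Vr 0)) (Mu LE (Vr 1))), (RMul (RJ LE LG (Mu LH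 (Vr 0))) (Vr 1)), (RMul (RJ LE LH (Mu LG (Vr 0))) (Vr 1)), (RMul (RJ LE LG (Vr 1)) (Vr 0)), (RMul (RJ LE LH (Vr 1)) (Mu LG (Vr 0))), (RMul (RJ LG LH (Vr 1)) (Mu LE (Vr 0))), (RMul (RM LE LG LH (Vr 0)) (Vr 1)), (RMul (RM LE LH LG (Vr 0)) (Vr 1)), (RMul (RMul (RJ LE LG (Vr 0)) (Vr 1)) LH), (RMul (RMul (RJ LE LH (Vr 0)) (Vr 1)) LG)]"])
      apply (erule PA_sound[where \<rho>=\<rho>, OF assms])
     apply code_simp
    apply code_simp
    done

lemma cA_G:
  assumes "\<rho> 0 \<in> NN" "\<rho> 1 \<in> NN"
  shows "sm (of_int 1) (evp \<rho> (jacp LG (Vr 0) (Vr 1))) = 0"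
    apply (rule cert[where P=PA and d=1 and tgt="jacp LG (Vr 0) (Vr 1)" and cs="[(1), (1), (1), (-1), (-1), (1), (1), (-1), (1), (1), (-1), (1), (1), (-1), (1), (1), (-1), (-1), (-1), (-1), (-1), (1), (1), (1), (2), (1), (-1), (-1), (1), (2), (1), (-1), (-1), (-1), (-1)]" and rs="[(RM LG LH (Vr 0) (Vr 1)), (RM LG LH (Vr 1) (Vr 0)), (RM LG (Vr 0) LH (Vr 1)), (RM LG LE (Vr 0) (Mu LG (Vr 1))), (RM LH LG (Vr 0) (Mu LH (Vr 1))), (RM LE LG (Mu LG (Vr 0)) (Vr 1)), (RM LG LE (Mu LG (Vr 0)) (Vr 1)), (RM LG LG (Mu LE (Vr 0)) (Vr 1)), (RM LG LH (Mu LH (Vr 0)) (Vr 1)), (RM LH LG (Mu LH (Vr 0)) (Vr 1)), (RM LH LH (Mu LG (Vr 0)) (Vr 1)), (RM LE LG (Vr 1) (Mu LG (Vr 0))), (RM LG LE (Vr 1) (Mu LG (Vr 0))), (RM LG LG (Vr 1) (Mu LE (Vr 0))), (RM LG LH (Vr 1) (Mu LH (Vr 0))), (RM LH LG (Vr 1) (Mu LH (Vr 0))), (RM LH LH (Vr 1) (Mu LG (Vr 0))), (RM LG LE (Mu LG (Vr 1)) (Vr 0)), (RM LH LG (Mu LH (Vr 1)) (Vr 0)), (RM LE (Vr 0) LG (Mu LG (Vr 1))), (RM LG (Vr 0) LH (Mu LH (Vr 1))), (RM LE (Mu LG (Vr 0)) LG (Vr 1)), (RM LG (Mu LH (Vr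 0)) LH (Vr 1)), (RMul (RJ LE LG (Vr 0)) (Mu LG (Vr 1))), (RMul (RJ LG LH (Vr 0)) (Vr 1)), (RMul (RJ LG LH (Vr 0)) (Mu LH (Vr 1))), (RMul (RJ LE LG (Mu LG (Vr 0))) (Vr 1)), (RMul (RJ LG LH (Mu LH (Vr 0))) (Vr 1)), (RMul (RJ LE LG (Vr 1)) (Mu LG (Vr 0))), (RMul (RJ LG LH (Vr 1)) (Vr 0)), (RMul (RJ LG LH (Vr 1)) (Mu LH (Vr 0))), (RMul (RM LE LG LG (Vr 0)) (Vr 1)), (RMul (RM LG LH LH (Vr 0)) (Vr 1)), (RMul (RMul (RJ LE LG (Vr 0)) (Vr 1)) LG), (RMul (RMul (RJ LG LH (Vr 0)) (Vr 1)) LH)]"])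
      apply (erule PA_sound[where \<rho>=\<rho>, OF assms])
     apply code_simp
    apply code_simp
    done

lemma A_letters:
  assumes x: "x \<in> NN" and y: "y \<in> NN"
  shows "jac mul E x y = 0" "jac mul H x y = 0" "jac mul GG x y = 0"
proof -
  let ?r = "\<lambda>i::nat. if i = 0 then x else y"
  have r0: "?r 0 \<in> NN" and r1: "?r 1 \<in> NN" using x y by simp_all
  show "jac mul E x y = 0" using cA_E[OF r0 r1] by (simp add: evp_jacp)
  show "jac mul H x y = 0" using cA_H[OF r0 r1] by (simp add: evp_jacp)
  show "jac mul GG x y = 0" using cA_G[OF r0 r1] by (simp add: evp_jacp)
qed

lemma JA:
  assumes c: "c \<in> span {E, H, F}" and x: "x \<in> NN" and y: "y \<in> NN"
  shows "jac mul c x y = 0"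
  using c
proof (induction rule: span_induct_alt)
  case base then show ?case by (simp add: jac_01)
next
  case (step c0 a0 w)
  have "jac mul a0 x y = 0"
  proof -
    have "jac mul F x y + jac mul F x y = 0"
      using A_letters(3)[OF x y] by (simp add: GG_def jac_add1)
    then have "jac mul F x y = 0" by (rule dbl0)
    then show ?thesis using step(1) A_letters[OF x y] by auto
  qed
  then show ?case using step(2) by (simp add: jac_lin1)
qed

lemma JA2: "c \<in> span {E, H, F} \<Longrightarrow> x \<in> NN \<Longrightarrow> y \<in> NN \<Longrightarrow> jac mul x c y = 0"
  by (metis JA jac_swap neg_equal_0_iff_equal)
lemma JA3: "c \<in> span {E, H, F} \<Longrightarrow> x \<in> NN \<Longrightarrow> y \<in> NN \<Longrightarrow> jac mul x y c = 0"
  by (metis JA jac_cyc)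

lemma L_N_letters: "E \<in> NN" "H \<in> NN" "GG \<in> NN"
proof -
  have j: "jac mul E H GG = 0"
    by (simp add: jac_def eh hg ge eg mnegl)
  have j2: "jac mul H E GG = 0" using j jac_swap[of E H GG] by simp
  have j3: "jac mul GG E H = 0" using j jac_cyc[of GG E H] jac_cyc[of E H GG] by simp
  show "E \<in> NN" using j by (intro NB) (simp_all add: jac_xx)
  show "H \<in> NN" using j2 jac_swap23[of H H E] by (intro NB) (simp_all add: jac_xx jac_xyy)
  show "GG \<in> NN" using j3 jac_swap23[of GG GG E] jac_swap23[of GG GG H] by (intro NB) (simp_all add: jac_xx jac_xyy)
qed

lemma L_N: "l \<in> span {E, H, F} \<Longrightarrow> l \<in> NN"
proof (induction rule: span_induct_alt)
  case base then show ?case by (simp add: NN_0)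
next
  case (step c a0 w)
  have FN: "F \<in> NN" using NN_sc[OF L_N_letters(3), of "1/2"] F_half by simp
  have "a0 \<in> NN" using step(1) L_N_letters FN by auto
  then show ?case using step(2) NN_add NN_sc by simp
qed

lemma PS_sound:
  assumes r0: "\<rho> 0 \<in> NN" and r1: "\<rho> 1 \<in> NN" and p: "PS a b c"
  shows "jac mul (ev \<rho> a) (ev \<rho> b) (ev \<rho> c) = 0"
proof -
  have m: "\<And>t. isLt t \<or> isNt t \<Longrightarrow> ev \<rho> t \<in> NN" using isNt_N[OF r0 r1] isLt_L L_N by blast
  have ma: "ev \<rho> a \<in> NN" "ev \<rho> b \<in> NN" "ev \<rho> c \<in> NN" using p m unfolding PS_def by blast+
  from p have "isLt a \<or> isLt b \<or> isLt c" by (simp add: PS_def)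
  then show ?thesis
  proof (elim disjE)
    assume "isLt a" then show ?thesis using JA[OF isLt_L ma(2,3)] by blast
  next
    assume "isLt b" then show ?thesis using JA2[OF isLt_L ma(1,3)] by blast
  next
    assume "isLt c" then show ?thesis using JA3[OF isLt_L ma(1,2)] by blast
  qed
qed


lemma cS_EH:
  assumes "\<rho> 0 \<in> NN" "\<rho> 1 \<in> NN"
  shows "sm (of_int 1) (evp \<rho> (jacp (Mu (Vr 0) (Vr 1)) LE LH)) = 0"
    apply (rule cert[where P=PS and d=1 and tgt="jacp (Mu (Vr 0) (Vr 1)) LE LH" and cs="[(-1), (-1), (-1), (1), (1)]" and rs="[(RJ LE (Vr 0) (Vr 1)), (RJ LE (Vr 0) (Mu LH (Vr 1))), (RJ LH (Vr 1) (Mu LE (Vr 0))), (RM LH LE (Vr 0) (Vr 1)), (RM LE LH (Vr 1) (Vr 0))]"])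
      apply (erule PS_sound[where \<rho>=\<rho>, OF assms])
     apply code_simp
    apply code_simp
    done

lemma cS_EG:
  assumes "\<rho> 0 \<in> NN" "\<rho> 1 \<in> NN"
  shows "sm (of_int 1) (evp \<rho> (jacp (Mu (Vr 0) (Vr 1)) LE LG)) = 0"
    apply (rule cert[where P=PS and d=1 and tgt="jacp (Mu (Vr 0) (Vr 1)) LE LG" and cs="[(-1), (-1), (-1), (1), (1)]" and rs="[(RJ LH (Vr 0) (Vr 1)), (RJ LE (Vr 0) (Mu LG (Vr 1))), (RJ LG (Vr 1) (Mu LE (Vr 0))), (RM LG LE (Vr 0) (Vr 1)), (RM LE LG (Vr 1) (Vr 0))]"])
      apply (erule PS_sound[where \<rho>=\<rho>, OF assms])
     apply code_simp
    apply code_simp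
    done

lemma cS_HG:
  assumes "\<rho> 0 \<in> NN" "\<rho> 1 \<in> NN"
  shows "sm (of_int 1) (evp \<rho> (jacp (Mu (Vr 0) (Vr 1)) LH LG)) = 0"
    apply (rule cert[where P=PS and d=1 and tgt="jacp (Mu (Vr 0) (Vr 1)) LH LG" and cs="[(-1), (1), (1), (-1), (-1)]" and rs="[(RJ LG (Vr 0) (Vr 1)), (RJ LG (Vr 0) (Mu LH (Vr 1))), (RJ LH (Vr 1) (Mu LG (Vr 0))), (RM LH LG (Vr 0) (Vr 1)), (RM LG LH (Vr 1) (Vr 0))]"])
      apply (erule PS_sound[where \<rho>=\<rho>, OF assms])
     apply code_simp
    apply code_simp
    done

lemma sub:
  assumes x: "x \<in> NN" and y: "y \<in> NN"
  shows "mul x y \<in> NN"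
proof -
  let ?r = "\<lambda>i::nat. if i = 0 then x else y"
  have r0: "?r 0 \<in> NN" and r1: "?r 1 \<in> NN" using x y by simp_all
  show ?thesis
    using cS_EH[OF r0 r1] cS_EG[OF r0 r1] cS_HG[OF r0 r1] by (intro NB) (simp_all add: evp_jacp)
qed

lemma allN: "(\<And>i. \<rho> i \<in> NN) \<Longrightarrow> ev \<rho> t \<in> NN"
  by (induction t) (auto intro: sub L_N_letters)

lemma PB_sound:
  assumes r: "\<And>i. \<rho> i \<in> NN" and p: "PB a b c"
  shows "jac mul (ev \<rho> a) (ev \<rho> b) (ev \<rho> c) = 0"
proof -
  have ma: "ev \<rho> a \<in> NN" "ev \<rho> b \<in> NN" "ev \<rho> c \<in> NN" using allN r by blast+
  from p have "isLt a \<or> isLt b \<or> isLt c" by (simp add: PB_def)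
  then show ?thesis
  proof (elim disjE)
    assume "isLt a" then show ?thesis using JA[OF isLt_L ma(2,3)] by blast
  next
    assume "isLt b" then show ?thesis using JA2[OF isLt_L ma(1,3)] by blast
  next
    assume "isLt c" then show ?thesis using JA3[OF isLt_L ma(1,2)] by blast
  qed
qed


lemma cB_E:
  assumes "\<And>i. \<rho> i \<in> NN"
  shows "sm (of_int 2) (evp \<rho> (mulp (jacp (Vr 0) (Vr 1) (Vr 2)) [(1, LE)])) = 0"
    apply (rule cert[where P=PB and d=2 and tgt="mulp (jacp (Vr 0) (Vr 1) (Vr 2)) [(1, LE)]" and cs="[(-1), (1), (-1), (-1), (-1), (-1)]" and rs="[(RJ LE (Vr 0) (Mu (Vr 1) (Vr 2))), (RJ LE (Vr 1) (Mu (Vr 0) (Vr 2))), (RJ LE (Vr 2) (Mu (Vr 0) (Vr 1))), (RM LE (Vr 0) (Vr 1) (Vr 2)), (RM LE (Vr 1) (Vr 2) (Vr 0)), (RM LE (Vr 2) (Vr 0) (Vr 1))]"])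
      apply (erule PB_sound[where \<rho>=\<rho>, OF assms])
     apply code_simp
    apply code_simp
    done

lemma cB_H:
  assumes "\<And>i. \<rho> i \<in> NN"
  shows "sm (of_int 2) (evp \<rho> (mulp (jacp (Vr 0) (Vr 1) (Vr 2)) [(1, LH)])) = 0"
    apply (rule cert[where P=PB and d=2 and tgt="mulp (jacp (Vr 0) (Vr 1) (Vr 2)) [(1, LH)]" and cs="[(-1), (1), (-1), (-1), (-1), (-1)]" and rs="[(RJ LH (Vr 0) (Mu (Vr 1) (Vr 2))), (RJ LH (Vr 1) (Mu (Vr 0) (Vr 2))), (RJ LH (Vr 2) (Mu (Vr 0) (Vr 1))), (RM LH (Vr 0) (Vr 1) (Vr 2)), (RM LH (Vr 1) (Vr 2) (Vr 0)), (RM LH (Vr 2) (Vr 0) (Vr 1))]"])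
      apply (erule PB_sound[where \<rho>=\<rho>, OF assms])
     apply code_simp
    apply code_simp
    done

lemma cB_G:
  assumes "\<And>i. \<rho> i \<in> NN"
  shows "sm (of_int 2) (evp \<rho> (mulp (jacp (Vr 0) (Vr 1) (Vr 2)) [(1, LG)])) = 0"
    apply (rule cert[where P=PB and d=2 and tgt="mulp (jacp (Vr 0) (Vr 1) (Vr 2)) [(1, LG)]" and cs="[(-1), (1), (-1), (-1), (-1), (-1)]" and rs="[(RJ LG (Vr 0) (Mu (Vr 1) (Vr 2))), (RJ LG (Vr 1) (Mu (Vr 0) (Vr 2))), (RJ LG (Vr 2) (Mu (Vr 0) (Vr 1))), (RM LG (Vr 0) (Vr 1) (Vr 2)), (RM LG (Vr 1) (Vr 2) (Vr 0)), (RM LG (Vr 2) (Vr 0) (Vr 1))]"])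
      apply (erule PB_sound[where \<rho>=\<rho>, OF assms])
     apply code_simp
    apply code_simp
    done

lemma B_letters:
  assumes x: "x \<in> NN" and y: "y \<in> NN" and z: "z \<in> NN"
  shows "mul (jac mul x y z) E = 0" "mul (jac mul x y z) H = 0" "mul (jac mul x y z) GG = 0"
proof -
  let ?r = "\<lambda>i::nat. if i = 0 then x else if i = 1 then y else z"
  have r: "\<And>i. ?r i \<in> NN" using x y z by simp
  have t: "(of_int 2 :: 'a) \<noteq> 0" using two by simp
  show "mul (jac mul x y z) E = 0" using cB_E[where \<rho>="?r", OF r] t by (simp add: evp_jacp evp_mulp)
  show "mul (jac mul x y z) H = 0" using cB_H[where \<rho>="?r", OF r] t by (simp add: evp_jacp evp_mulp)
  show "mul (jac mul x y z) GG = 0" using cB_G[where \<rho>="?r", OF r] t by (simp add: evp_jacp evp_mulp)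
qed

lemma JB:
  assumes faithful: "\<forall>m. m \<noteq> 0 \<longrightarrow> (\<exists>l\<in>span {E, H, F}. mul m l \<noteq> 0)"
    and x: "x \<in> NN" and y: "y \<in> NN" and z: "z \<in> NN"
  shows "jac mul x y z = 0"
proof -
  let ?j = "jac mul x y z"
  have "\<And>l. l \<in> span {E, H, F} \<Longrightarrow> mul ?j l = 0"
  proof -
    fix l assume "l \<in> span {E, H, F}"
    then show "mul ?j l = 0"
    proof (induction rule: span_induct_alt)
      case base then show ?case by simp
    next
      case (step c a0 w)
      have "mul ?j a0 = 0"
      proof -
        have "mul ?j F = sm (1/2) (mul ?j GG)" by (subst F_half) (simp add: msc2)
        then show ?thesis using step(1) B_letters[OF x y z] by auto
      qed
      then show ?case using step(2) by (simp add: madd2 msc2)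
    qed
  qed
  then show ?thesis using faithful by blast
qed

end


theorem mainTheorem3:
  fixes sm :: "'a::field \<Rightarrow> 'm::ab_group_add \<Rightarrow> 'm"
    and mul :: "'m \<Rightarrow> 'm \<Rightarrow> 'm"
    and E H F :: 'm
  assumes char2: "(2::'a) \<noteq> 0" and char3: "(3::'a) \<noteq> 0"
    and HM: "in_variety_H sm mul"
    and sl2: "sl2_triple sm mul E H F"
    and faithful: "\<forall>m. m \<noteq> 0 \<longrightarrow> (\<exists>l\<in>module.span sm {E, H, F}. mul m l \<noteq> 0)"
  shows "module.subspace sm (N_set sm mul (module.span sm {E, H, F}))
    \<and> (\<forall>x\<in>N_set sm mul (module.span sm {E, H, F}). \<forall>y\<in>N_set sm mul (module.span sm {E, H, F}).
          mul x y \<in> N_set sm mul (module.span sm {E, H, F}))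
    \<and> (\<forall>x\<in>N_set sm mul (module.span sm {E, H, F}). \<forall>y\<in>N_set sm mul (module.span sm {E, H, F}).
         \<forall>z\<in>N_set sm mul (module.span sm {E, H, F}). jac mul x y z = 0)"
proof -
  from HM have ma: "malcev_algebra sm mul" by (simp add: in_variety_H_def)
  then have vs: "Vector_Spaces.vector_space sm" and bil: "bilinear_prod sm mul"
    and ac: "anticommutative mul" and mi: "malcev_identity mul"
    by (simp_all add: malcev_algebra_def)
  from sl2 have eh: "mul E H = E" and fh: "mul F H = - F" and ef: "mul E F = sm (1/2) H"
    by (simp_all add: sl2_triple_def)
  interpret mc sm mul E H F
    using vs bil ac mi eh fh ef char2 by (simp add: mc_def)
  have NNdef: "N_set sm mul (span {E, H, F}) = NN" by (simp add: NN_def)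
  show ?thesis
    unfolding NNdef
    by (auto intro!: subspaceI NN_0 NN_add NN_sc sub JB[OF faithful])
qed

end
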